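(* Let $K$ be an oriented Legendrian knot with rotation number $r=rot(K)$, let $T(K)$ be its underlying topological knot, and let $(X,\ast,u,u^{-1})$ be a finite GL-quandle. Then $$\operatorname{Col}_X\bigl(S_{-\operatorname{sgn}(r)}^{|r|}(K)\bigr)=\operatorname{Col}_X\bigl(T(K)\bigr),$$ where $S_{-\operatorname{sgn}(r)}^{|r|}(K)$ denotes $|r|$ negative stabilizations of $K$ if $r>0$, $|r|$ positive stabilizations if $r<0$, and $K$ itself if $r=0$.
   Context: A rack is a set $X$ with a binary operation $\ast$ such that for every $y\in X$ the map $x\mapsto x\ast y$ is a bijection of $X$ and $(x\ast y)\ast z=(x\ast z)\ast(y\ast z)$ for all $x,y,z$; it is a quandle if also $x\ast x=x$. A GL-rack is a quadruple $(X,\ast,u,d)$ where $(X,\ast)$ is a rack and $u,d\colon X\to X$ are maps such that for all $x,y\in X$: $u(d(x\ast x))=d(u(x\ast x))=x$; $u(x\ast y)=u(x)\ast y$ and $d(x\ast y)=d(x)\ast y$; $x\ast u(y)=x\ast d(y)=x\ast y$. A GL-quandle is a GL-rack with $x\ast x=x$ for all $x$ (then $d=u^{-1}$). Legendrian knots lie in $(\mathbb{R}^3,\xi_{\mathrm{std}})$, $\xi_{\mathrm{std}}=\mathrm{span}\{\partial_y,\partial_x+y\partial_z\}$, and are represented by oriented front diagrams. For a front diagram $D$ with $u(D)$ cusps traversed upward and $d(D)$ traversed downward, $rot(K)=\frac12(d(D)-u(D))$. Positive/negative stabilization $S_\pm$ (inserting a zigzag) changes $rot$ by $\pm1$. Given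 a finite GL-rack $X$, a coloring of $D$ is an assignment of elements of $X$ to the semi-arcs of $D$ (segments bounded by undercrossings or cusps) such that, following the orientation through a cusp, the color changes from $x$ to $u(x)$ if the cusp is traversed upward and to $d(x)$ if traversed downward; and at each crossing whose over-strand is colored $y$, if the under semi-arc on the right of the oriented over-strand is colored $x$, the one on its left is colored $x\ast y$. $\operatorname{Col}_X(K)$ is the number of colorings (a Legendrian isotopy invariant). For a topological knot $T$, $\operatorname{Col}_X(T)$ denotes the usual quandle coloring number of $T$ by the quandle $(X,\ast)$: the number of assignments of elements of $X$ to the arcs of an oriented diagram of $T$ such that at each crossing with over-arc colored $y$, the under-arc on the right of the oriented over-arc colored $x$ forces the under-arc on its left to be colored $x\ast y$; equivalently $|\operatorname{Hom}(Q(T),X)|$ for the knot quandle $Q(T)$. *)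

theory Defs
  imports Main
begin

definition rack :: "'a set \<Rightarrow> ('a \<Rightarrow> 'a \<Rightarrow> 'a) \<Rightarrow> bool" where
  "rack X op \<longleftrightarrow>
     (\<forall>x\<in>X. \<forall>y\<in>X. op x y \<in> X) \<and>
     (\<forall>y\<in>X. bij_betw (\<lambda>x. op x y) X X) \<and>
     (\<forall>x\<in>X. \<forall>y\<in>X. \<forall>z\<in>X. op (op x y) z = op (op x z) (op y z))"

definition gl_rack :: "'a set \<Rightarrow> ('a \<Rightarrow> 'a \<Rightarrow> 'a) \<Rightarrow> ('a \<Rightarrow> 'a) \<Rightarrow> ('a \<Rightarrow> 'a) \<Rightarrow> bool" where
  "gl_rack X op u d \<longleftrightarrow>
     rack X op \<and>
     (\<forall>x\<in>X. u x \<in> X) \<and> (\<forall>x\<in>X. d x \<in> X) \<and>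
     (\<forall>x\<in>X. u (d (op x x)) = x \<and> d (u (op x x)) = x) \<and>
     (\<forall>x\<in>X. \<forall>y\<in>X. u (op x y) = op (u x) y \<and> d (op x y) = op (d x) y) \<and>
     (\<forall>x\<in>X. \<forall>y\<in>X. op x (u y) = op x y \<and> op x (d y) = op x y)"

definition gl_quandle :: "'a set \<Rightarrow> ('a \<Rightarrow> 'a \<Rightarrow> 'a) \<Rightarrow> ('a \<Rightarrow> 'a) \<Rightarrow> ('a \<Rightarrow> 'a) \<Rightarrow> bool" where
  "gl_quandle X op u d \<longleftrightarrow> gl_rack X op u d \<and> (\<forall>x\<in>X. op x x = x)"

text \<open>A front diagram with n semi-arcs is a list of n events, read along the
orientation. Semi-arc k runs from event (k-1 mod n) to event k, so event k
separates semi-arc k from semi-arc ((k+1) mod n).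
  FCusp True  : a cusp traversed upward;  FCusp False : a cusp traversed downward.
  FCross j s  : the knot passes under the over-strand, which lies on semi-arc j;
                s = True means the incoming under semi-arc k lies on the right of
                the oriented over-strand (the outgoing one on its left),
                s = False means the incoming one lies on its left.\<close>

datatype fevent = FCusp bool | FCross nat bool

definition n_up :: "fevent list \<Rightarrow> nat" where
  "n_up D = length (filter (\<lambda>e. e = FCusp True) D)"

definition n_down :: "fevent list \<Rightarrow> nat" where
  "n_down D = length (filter (\<lambda>e. e = FCusp False) D)"

definition front_wf :: "fevent list \<Rightarrow> bool" where
  "front_wf D \<longleftrightarrow> D \<noteq> [] \<and> even (n_up D + n_down D) \<and>
     (\<forall>e\<in>set D. \<forall>j s. e = FCross j s \<longrightarrow> j < length D)"

definition rot :: "fevent list \<Rightarrow> int" where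
  "rot D = (int (n_down D) - int (n_up D)) div 2"

definition front_coloring ::
  "'a set \<Rightarrow> ('a \<Rightarrow> 'a \<Rightarrow> 'a) \<Rightarrow> ('a \<Rightarrow> 'a) \<Rightarrow> ('a \<Rightarrow> 'a) \<Rightarrow> fevent list \<Rightarrow> 'a list \<Rightarrow> bool" where
  "front_coloring X op u d D c \<longleftrightarrow>
     length c = length D \<and> set c \<subseteq> X \<and>
     (\<forall>k < length D. let n = length D; a = c ! k; b = c ! ((k + 1) mod n) in
        (case D ! k of
           FCusp True \<Rightarrow> b = u a
         | FCusp False \<Rightarrow> b = d a
         | FCross j True \<Rightarrow> b = op a (c ! j)
         | FCross j False \<Rightarrow> a = op b (c ! j)))"

definition Col_front ::
  "'a set \<Rightarrow> ('a \<Rightarrow> 'a \<Rightarrow> 'a) \<Rightarrow> ('a \<Rightarrow> 'a) \<Rightarrow> ('a \<Rightarrow> 'a) \<Rightarrow> fevent list \<Rightarrow> nat" where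
  "Col_front X op u d D = card {c. front_coloring X op u d D c}"

text \<open>The underlying topological diagram T(K): cusps are smoothed to ordinary
(marked) points of the curve; crossings are kept.\<close>

datatype tevent = TMark | TCross nat bool

fun smooth :: "fevent \<Rightarrow> tevent" where
  "smooth (FCusp _) = TMark"
| "smooth (FCross j s) = TCross j s"

definition underlying :: "fevent list \<Rightarrow> tevent list" where
  "underlying D = map smooth D"

text \<open>Quandle colorings of a (marked) knot diagram: colors on the segments; the
color is unchanged across a marked point (so it is constant on arcs), and the
usual crossing rule holds.\<close>
definition top_coloring ::
  "'a set \<Rightarrow> ('a \<Rightarrow> 'a \<Rightarrow> 'a) \<Rightarrow> tevent list \<Rightarrow> 'a list \<Rightarrow> bool" where
  "top_coloring X op T c \<longleftrightarrow>
     length c = length T \<and> set c \<subseteq> X \<and>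
     (\<forall>k < length T. let n = length T; a = c ! k; b = c ! ((k + 1) mod n) in
        (case T ! k of
           TMark \<Rightarrow> b = a
         | TCross j True \<Rightarrow> b = op a (c ! j)
         | TCross j False \<Rightarrow> a = op b (c ! j)))"

definition Col_top :: "'a set \<Rightarrow> ('a \<Rightarrow> 'a \<Rightarrow> 'a) \<Rightarrow> tevent list \<Rightarrow> nat" where
  "Col_top X op T = card {c. top_coloring X op T c}"

text \<open>Positive stabilization (sigma = 1) adds
two cusps traversed downward (rot increases by 1); negative (sigma = -1) adds two
cusps traversed upward. Semi-arc i is split into i (before the zigzag), i+1
(middle) and i+2 (after); later semi-arcs are shifted by 2. A crossing whose
over-strand lay on semi-arc i is placed before or after the zigzag according to
the choice function 'after' (indexed by the old event position).\<close>

definition remap :: "nat \<Rightarrow> (nat \<Rightarrow> bool) \<Rightarrow> nat \<Rightarrow> nat \<Rightarrow> nat" where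
  "remap i after k j = (if j < i then j else if i < j then j + 2
                        else if after k then i + 2 else i)"

fun remap_event :: "nat \<Rightarrow> (nat \<Rightarrow> bool) \<Rightarrow> nat \<Rightarrow> fevent \<Rightarrow> fevent" where
  "remap_event i after k (FCusp b) = FCusp b"
| "remap_event i after k (FCross j s) = FCross (remap i after k j) s"

definition insert_zigzag :: "int \<Rightarrow> nat \<Rightarrow> (nat \<Rightarrow> bool) \<Rightarrow> fevent list \<Rightarrow> fevent list" where
  "insert_zigzag \<sigma> i after D =
     (let D1 = map (\<lambda>(k, e). remap_event i after k e) (zip [0..<length D] D)
      in take i D1 @ [FCusp (\<sigma> < 0), FCusp (\<sigma> < 0)] @ drop i D1)"

inductive stabs :: "int \<Rightarrow> nat \<Rightarrow> fevent list \<Rightarrow> fevent list \<Rightarrow> bool" where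
  stabs_zero: "stabs \<sigma> 0 D D"
| stabs_step: "stabs \<sigma> m D D1 \<Longrightarrow> i < length D1 \<Longrightarrow>
                 stabs \<sigma> (Suc m) D (insert_zigzag \<sigma> i after D1)"

end

theory Submission
  imports Defs
begin


definition pw :: "('a\<Rightarrow>'a) \<Rightarrow> ('a\<Rightarrow>'a) \<Rightarrow> int \<Rightarrow> 'a \<Rightarrow> 'a" where
  "pw u d n x = (if n \<ge> 0 then (u ^^ nat n) x else (d ^^ nat (-n)) x)"

locale glq =
  fixes X :: "'a set" and op :: "'a \<Rightarrow> 'a \<Rightarrow> 'a" and u d :: "'a \<Rightarrow> 'a"
  assumes glq: "gl_quandle X op u d"
begin

lemma opX: "x \<in> X \<Longrightarrow> y \<in> X \<Longrightarrow> op x y \<in> X"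
  using glq unfolding gl_quandle_def gl_rack_def rack_def by blast
lemma uX: "x \<in> X \<Longrightarrow> u x \<in> X"
  using glq unfolding gl_quandle_def gl_rack_def by blast
lemma dX: "x \<in> X \<Longrightarrow> d x \<in> X"
  using glq unfolding gl_quandle_def gl_rack_def by blast
lemma ud: "x \<in> X \<Longrightarrow> u (d x) = x"
  using glq unfolding gl_quandle_def gl_rack_def by metis
lemma du: "x \<in> X \<Longrightarrow> d (u x) = x"
  using glq unfolding gl_quandle_def gl_rack_def by metis
lemma u_op: "x \<in> X \<Longrightarrow> y \<in> X \<Longrightarrow> u (op x y) = op (u x) y"
  using glq unfolding gl_quandle_def gl_rack_def by blast
lemma d_op: "x \<in> X \<Longrightarrow> y \<in> X \<Longrightarrow> d (op x y) = op (d x) y"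
  using glq unfolding gl_quandle_def gl_rack_def by blast
lemma op_u: "x \<in> X \<Longrightarrow> y \<in> X \<Longrightarrow> op x (u y) = op x y"
  using glq unfolding gl_quandle_def gl_rack_def by blast
lemma op_d: "x \<in> X \<Longrightarrow> y \<in> X \<Longrightarrow> op x (d y) = op x y"
  using glq unfolding gl_quandle_def gl_rack_def by blast

abbreviation P where "P \<equiv> pw u d"

lemma pw0[simp]: "P 0 x = x" by (simp add: pw_def)

lemma pwX: "x \<in> X \<Longrightarrow> P n x \<in> X"
proof -
  assume x: "x \<in> X"
  have a: "(u ^^ k) x \<in> X" for k by (induction k) (auto simp: x uX)
  have b: "(d ^^ k) x \<in> X" for k by (induction k) (auto simp: x dX)
  show ?thesis using a b by (simp add: pw_def)
qed

lemma pw_suc: "x \<in> X \<Longrightarrow> P (n+1) x = u (P n x)"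
proof (cases "n \<ge> 0")
  case True
  assume x: "x \<in> X"
  have "nat (n+1) = Suc (nat n)" using True by simp
  then show ?thesis using True by (simp add: pw_def)
next
  case False
  assume x: "x \<in> X"
  have b: "(d ^^ k) x \<in> X" for k by (induction k) (auto simp: x dX)
  show ?thesis
  proof (cases "n = -1")
    case True then show ?thesis using x by (simp add: pw_def ud)
  next
    case F2: False
    have "nat (-n) = Suc (nat (-(n+1)))" using False F2 by simp
    then show ?thesis using False F2 b by (simp add: pw_def ud)
  qed
qed

lemma pw_pred: "x \<in> X \<Longrightarrow> P (n-1) x = d (P n x)"
proof -
  assume x: "x \<in> X"
  have "P n x = P ((n-1)+1) x" by simp
  also have "\<dots> = u (P (n-1) x)" using pw_suc x by blast
  finally show ?thesis using du pwX x by simp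
qed

lemma pw_add: "x \<in> X \<Longrightarrow> P (m+n) x = P m (P n x)"
proof (induction m rule: int_induct[where k=0])
  case base then show ?case by simp
next
  case (step1 i)
  have "P (i+1+n) x = P ((i+n)+1) x" by (simp add: ac_simps)
  also have "\<dots> = u (P (i+n) x)" using pw_suc step1 by blast
  also have "\<dots> = P (i+1) (P n x)" using step1 pw_suc pwX by simp
  finally show ?case .
next
  case (step2 i)
  have "P (i-1+n) x = P ((i+n)-1) x" by (simp add: algebra_simps)
  also have "\<dots> = d (P (i+n) x)" using pw_pred step2 by blast
  also have "\<dots> = P (i-1) (P n x)" using step2 pw_pred pwX by simp
  finally show ?case .
qed

lemma pw_inv: "x \<in> X \<Longrightarrow> P (-n) (P n x) = x"
  using pw_add[of x "-n" n] by simp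

lemma pw_inj: "x \<in> X \<Longrightarrow> y \<in> X \<Longrightarrow> P n x = P n y \<longleftrightarrow> x = y"
  by (metis pw_inv)

lemma op_pw: "x \<in> X \<Longrightarrow> y \<in> X \<Longrightarrow> op x (P n y) = op x y"
proof (induction n rule: int_induct[where k=0])
  case base then show ?case by simp
next
  case (step1 i) then show ?case using pw_suc op_u pwX by simp
next
  case (step2 i) then show ?case using pw_pred op_d pwX by simp
qed

lemma pw_op: "x \<in> X \<Longrightarrow> y \<in> X \<Longrightarrow> P n (op x y) = op (P n x) y"
proof (induction n rule: int_induct[where k=0])
  case base then show ?case by simp
next
  case (step1 i) then show ?case using pw_suc u_op pwX opX by simp
next
  case (step2 i) then show ?case using pw_pred d_op pwX opX by simp
qed

end


definition delta :: "fevent \<Rightarrow> int" where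
  "delta e = (case e of FCusp True \<Rightarrow> 1 | FCusp False \<Rightarrow> -1 | FCross _ _ \<Rightarrow> 0)"

definition acc :: "fevent list \<Rightarrow> nat \<Rightarrow> int" where
  "acc D k = sum_list (map delta (take k D))"

definition cwf :: "fevent list \<Rightarrow> bool" where
  "cwf D \<longleftrightarrow> (\<forall>e\<in>set D. \<forall>j s. e = FCross j s \<longrightarrow> j < length D)"

lemma sum_delta: "sum_list (map delta D) = int (n_up D) - int (n_down D)"
  by (induction D) (auto simp: n_up_def n_down_def delta_def split: fevent.split bool.split)

lemma acc_step:
  assumes "k < length D" "n_up D = n_down D"
  shows "acc D ((k+1) mod length D) = acc D k + delta (D!k)"
proof (cases "k+1 < length D")
  case True
  then show ?thesis using assms by (simp add: acc_def take_Suc_conv_app_nth)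
next
  case False
  then have k: "k + 1 = length D" using assms by simp
  have "acc D (length D) = 0" using assms sum_delta[of D] by (simp add: acc_def)
  moreover have "acc D (k+1) = acc D k + delta (D!k)"
    using assms by (simp add: acc_def take_Suc_conv_app_nth)
  ultimately have "acc D k + delta (D!k) = 0" using k by simp
  then show ?thesis using k by (simp add: acc_def)
qed

context glq begin

lemma ev_equiv:
  assumes k: "k < length D" and lc: "length c = length D" and lN: "length N = length D"
    and NX: "set N \<subseteq> X" and cN: "\<forall>m<length D. c!m = P (acc D m) (N!m)"
    and bal: "n_up D = n_down D" and cw: "cwf D"
  shows "(let n = length D; a = c ! k; b = c ! ((k + 1) mod n) in
        (case D ! k of
           FCusp True \<Rightarrow> b = u a
         | FCusp False \<Rightarrow> b = d a
         | FCross j True \<Rightarrow> b = op a (c ! j)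
         | FCross j False \<Rightarrow> a = op b (c ! j)))
     \<longleftrightarrow> (let n = length (underlying D); a = N ! k; b = N ! ((k + 1) mod n) in
        (case underlying D ! k of
           TMark \<Rightarrow> b = a
         | TCross j True \<Rightarrow> b = op a (N ! j)
         | TCross j False \<Rightarrow> a = op b (N ! j)))"
proof -
  define n where "n = length D"
  define k' where "k' = (k+1) mod n"
  have n0: "n > 0" using k n_def by linarith
  have k': "k' < n" using n0 k'_def by simp
  have Nk: "N!k \<in> X" using NX lN k by (auto simp: set_conv_nth)
  have Nk': "N!k' \<in> X" using NX lN k' n_def by (auto simp: set_conv_nth)
  have ck: "c!k = P (acc D k) (N!k)" using cN k by simp
  have ck': "c!k' = P (acc D k + delta (D!k)) (N!k')"
    using cN k' acc_step[OF k bal] n_def k'_def by simp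
  have und: "underlying D ! k = smooth (D!k)" using k by (simp add: underlying_def)
  have lu: "length (underlying D) = n" by (simp add: underlying_def n_def)
  show ?thesis
  proof (cases "D!k")
    case (FCusp b)
    show ?thesis
    proof (cases b)
      case True
      have "c!k' = u (c!k) \<longleftrightarrow> P (acc D k + 1) (N!k') = P (acc D k + 1) (N!k)"
        using ck ck' FCusp True pw_suc Nk by (simp add: delta_def)
      also have "\<dots> \<longleftrightarrow> N!k' = N!k" using pw_inj Nk Nk' by blast
      finally show ?thesis using FCusp True und lu by (simp add: Let_def n_def k'_def)
    next
      case False
      have "c!k' = d (c!k) \<longleftrightarrow> P (acc D k - 1) (N!k') = P (acc D k - 1) (N!k)"
        using ck ck' FCusp False pw_pred Nk by (simp add: delta_def)
      also have "\<dots> \<longleftrightarrow> N!k' = N!k" using pw_inj Nk Nk' by blast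
      finally show ?thesis using FCusp False und lu by (simp add: Let_def n_def k'_def)
    qed
  next
    case (FCross j s)
    have j: "j < n" using cw FCross k unfolding cwf_def n_def by (metis nth_mem)
    have Nj: "N!j \<in> X" using NX lN j n_def by (auto simp: set_conv_nth)
    have cj: "op x (c!j) = op x (N!j)" if "x \<in> X" for x
      using cN j n_def op_pw that Nj by simp
    have ck'2: "c!k' = P (acc D k) (N!k')" using ck' FCross by (simp add: delta_def)
    have e1: "c!k' = op (c!k) (c!j) \<longleftrightarrow> N!k' = op (N!k) (N!j)"
    proof -
      have "op (c!k) (c!j) = P (acc D k) (op (N!k) (N!j))"
        using cj ck pw_op Nk Nj pwX by simp
      then show ?thesis using ck'2 pw_inj Nk' opX Nk Nj by simp
    qed
    have e2: "c!k = op (c!k') (c!j) \<longleftrightarrow> N!k = op (N!k') (N!j)"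
    proof -
      have "op (c!k') (c!j) = P (acc D k) (op (N!k') (N!j))"
        using cj ck'2 pw_op Nk' Nj pwX by simp
      then show ?thesis using ck pw_inj Nk opX Nk' Nj by simp
    qed
    show ?thesis
      using e1 e2 FCross und lu by (cases s) (simp_all add: Let_def n_def k'_def)
  qed
qed

end


context glq begin

lemma coloring_equiv:
  assumes lc: "length c = length D" and lN: "length N = length D"
    and cX: "set c \<subseteq> X" and NX: "set N \<subseteq> X" and cN: "\<forall>m<length D. c!m = P (acc D m) (N!m)"
    and bal: "n_up D = n_down D" and cw: "cwf D"
  shows "front_coloring X op u d D c \<longleftrightarrow> top_coloring X op (underlying D) N"
proof -
  have lu: "length (underlying D) = length D" by (simp add: underlying_def)
  show ?thesis
    unfolding front_coloring_def top_coloring_def lu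
    using ev_equiv[OF _ lc lN NX cN bal cw] lc lN cX NX by (simp add: lu)
qed

lemma fc_basic: "front_coloring X op u d D c \<Longrightarrow> length c = length D \<and> set c \<subseteq> X"
  unfolding front_coloring_def by blast
lemma tc_basic: "top_coloring X op T c \<Longrightarrow> length c = length T \<and> set c \<subseteq> X"
  unfolding top_coloring_def by blast

lemma colA:
  assumes bal: "n_up D = n_down D" and cw: "cwf D"
  shows "Col_front X op u d D = Col_top X op (underlying D)"
proof -
  define F where "F c = map (\<lambda>m. P (-(acc D m)) (c!m)) [0..<length D]" for c
  define G where "G N = map (\<lambda>m. P (acc D m) (N!m)) [0..<length D]" for N
  let ?A = "{c. front_coloring X op u d D c}"
  let ?B = "{N. top_coloring X op (underlying D) N}"
  have lu: "length (underlying D) = length D" by (simp add: underlying_def)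
  have FX: "set (F c) \<subseteq> X" if "set c \<subseteq> X" "length c = length D" for c
  proof
    fix x assume "x \<in> set (F c)"
    then obtain m where m: "m < length D" "x = P (-(acc D m)) (c!m)" by (auto simp: F_def)
    have "c!m \<in> set c" using m that(2) by simp
    then have "c!m \<in> X" using that(1) by blast
    then show "x \<in> X" using m pwX by simp
  qed
  have GX: "set (G c) \<subseteq> X" if "set c \<subseteq> X" "length c = length D" for c
  proof
    fix x assume "x \<in> set (G c)"
    then obtain m where m: "m < length D" "x = P (acc D m) (c!m)" by (auto simp: G_def)
    have "c!m \<in> set c" using m that(2) by simp
    then have "c!m \<in> X" using that(1) by blast
    then show "x \<in> X" using m pwX by simp
  qed
  have cF: "\<forall>m<length D. c!m = P (acc D m) (F c!m)" if "set c \<subseteq> X" "length c = length D" for c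
  proof (intro allI impI)
    fix m assume m: "m < length D"
    have "c!m \<in> set c" using m that(2) by simp
    then have cX: "c!m \<in> X" using that(1) by blast
    have "F c ! m = P (-acc D m) (c!m)" using m by (simp add: F_def)
    then show "c!m = P (acc D m) (F c!m)" using pw_inv[OF cX, of "-acc D m"] by simp
  qed
  have cG: "\<forall>m<length D. G c!m = P (acc D m) (c!m)" for c
    by (auto simp: G_def)
  have b: "bij_betw F ?A ?B"
  proof (rule bij_betw_byWitness[where f'=G])
    show "\<forall>a\<in>?A. G (F a) = a"
    proof
      fix a assume "a \<in> ?A"
      then have a: "length a = length D" "set a \<subseteq> X" using fc_basic by auto
      show "G (F a) = a"
      proof (rule nth_equalityI)
        show "length (G (F a)) = length a" using a by (simp add: G_def)
        fix m assume "m < length (G (F a))"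
        then have m: "m < length D" by (simp add: G_def)
        have "G (F a) ! m = P (acc D m) (F a ! m)" using m by (simp add: G_def)
        then show "G (F a) ! m = a ! m" using cF[OF a(2,1)] m by simp
      qed
    qed
    show "\<forall>a\<in>?B. F (G a) = a"
    proof
      fix a assume "a \<in> ?B"
      then have a: "length a = length D" "set a \<subseteq> X" using tc_basic lu by auto
      have "a!m \<in> X" if "m < length D" for m
      proof -
        have "a!m \<in> set a" using a(1) that by simp
        then show ?thesis using a(2) by blast
      qed
      then show "F (G a) = a" using a pw_inv
        by (intro nth_equalityI) (auto simp: G_def F_def)
    qed
    show "F ` ?A \<subseteq> ?B"
    proof
      fix N assume "N \<in> F ` ?A"
      then obtain c where c: "c \<in> ?A" "N = F c" by blast
      then have a: "length c = length D" "set c \<subseteq> X" using fc_basic by auto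
      have lF: "length (F c) = length D" by (simp add: F_def)
      have "top_coloring X op (underlying D) (F c)"
        using coloring_equiv[OF a(1) lF a(2) FX[OF a(2,1)] cF[OF a(2,1)] bal cw] c by simp
      then show "N \<in> ?B" using c by simp
    qed
    show "G ` ?B \<subseteq> ?A"
    proof
      fix c assume "c \<in> G ` ?B"
      then obtain N where c: "N \<in> ?B" "c = G N" by blast
      then have a: "length N = length D" "set N \<subseteq> X" using tc_basic lu by auto
      have lG: "length (G N) = length D" by (simp add: G_def)
      have "front_coloring X op u d D (G N)"
        using coloring_equiv[OF lG a(1) GX[OF a(2,1)] a(2) cG bal cw] c by simp
      then show "c \<in> ?A" using c by simp
    qed
  qed
  then show ?thesis unfolding Col_front_def Col_top_def by (rule bij_betw_same_card)
qed

end


definition cond :: "('a \<Rightarrow> 'a \<Rightarrow> 'a) \<Rightarrow> tevent list \<Rightarrow> 'a list \<Rightarrow> nat \<Rightarrow> bool" where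
  "cond op T c k \<longleftrightarrow> (let n = length T; a = c ! k; b = c ! ((k + 1) mod n) in
        (case T ! k of
           TMark \<Rightarrow> b = a
         | TCross j True \<Rightarrow> b = op a (c ! j)
         | TCross j False \<Rightarrow> a = op b (c ! j)))"

lemma top_coloring_cond: "top_coloring X op T c \<longleftrightarrow>
   length c = length T \<and> set c \<subseteq> X \<and> (\<forall>k<length T. cond op T c k)"
  unfolding top_coloring_def cond_def by simp

lemma tc_basic2: "top_coloring X op T c \<Longrightarrow> length c = length T \<and> set c \<subseteq> X"
  unfolding top_coloring_def by blast

lemma n_up_app: "n_up (A @ B) = n_up A + n_up B" by (simp add: n_up_def)
lemma n_down_app: "n_down (A @ B) = n_down A + n_down B" by (simp add: n_down_def)

lemma n_up_remap: "length xs = length D \<Longrightarrow>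
   n_up (map (\<lambda>(k, e). remap_event i after k e) (zip xs D)) = n_up D"
proof (induction D arbitrary: xs)
  case Nil then show ?case by simp
next
  case (Cons e D) then obtain x xs' where "xs = x # xs'" by (cases xs) auto
  with Cons show ?case by (cases e) (auto simp: n_up_def)
qed

lemma n_down_remap: "length xs = length D \<Longrightarrow>
   n_down (map (\<lambda>(k, e). remap_event i after k e) (zip xs D)) = n_down D"
proof (induction D arbitrary: xs)
  case Nil then show ?case by simp
next
  case (Cons e D) then obtain x xs' where "xs = x # xs'" by (cases xs) auto
  with Cons show ?case by (cases e) (auto simp: n_down_def)
qed

locale zz =
  fixes D1 :: "fevent list" and i :: nat and after :: "nat \<Rightarrow> bool" and \<sigma> :: int
  assumes cw: "cwf D1" and il: "i < length D1"
begin

abbreviation "n \<equiv> length D1"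
abbreviation "D2 \<equiv> insert_zigzag \<sigma> i after D1"
abbreviation "M \<equiv> map (\<lambda>(k, e). remap_event i after k e) (zip [0..<length D1] D1)"

lemma lenM: "length M = n" by simp
lemma M_nth: "k < n \<Longrightarrow> M ! k = remap_event i after k (D1 ! k)" by simp

lemma len2: "length D2 = n + 2"
  using il by (simp add: insert_zigzag_def Let_def)

lemma D2_nth: "k < n + 2 \<Longrightarrow> D2 ! k = (if k < i then remap_event i after k (D1!k)
   else if k < i + 2 then FCusp (\<sigma> < 0) else remap_event i after (k-2) (D1!(k-2)))"
proof -
  assume k: "k < n + 2"
  define c where "c = FCusp (\<sigma> < 0)"
  have D2: "D2 = take i M @ [c, c] @ drop i M" by (simp add: insert_zigzag_def Let_def c_def)
  have lt: "length (take i M) = i" using il by simp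
  show ?thesis
  proof (cases "k < i")
    case True
    then show ?thesis unfolding D2 using lt il by (simp add: nth_append)
  next
    case F1: False
    show ?thesis
    proof (cases "k < i + 2")
      case True
      then have "k = i \<or> k = i + 1" using F1 by auto
      then show ?thesis unfolding D2 using lt il F1 True by (auto simp: nth_append c_def)
    next
      case False
      have "D2 ! k = ([c, c] @ drop i M) ! (k - i)" unfolding D2 using lt F1 by (simp add: nth_append)
      also have "\<dots> = drop i M ! (k - i - 2)" using False by (simp add: nth_append)
      also have "\<dots> = M ! (k - 2)" using False k il by simp
      finally show ?thesis using False F1 k by simp
    qed
  qed
qed

lemma nup2: "n_up D2 = n_up D1 + (if \<sigma> < 0 then 2 else 0)"
proof -
  have "n_up D2 = n_up (take i M) + n_up [FCusp (\<sigma> < 0), FCusp (\<sigma> < 0)] + n_up (drop i M)"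
    unfolding insert_zigzag_def Let_def by (simp only: n_up_app add.assoc)
  also have "\<dots> = n_up M + n_up [FCusp (\<sigma> < 0), FCusp (\<sigma> < 0)]"
    using n_up_app[of "take i M" "drop i M"] by simp
  finally show ?thesis using n_up_remap[of "[0..<n]" D1 i after] by (simp add: n_up_def)
qed

lemma ndown2: "n_down D2 = n_down D1 + (if \<sigma> < 0 then 0 else 2)"
proof -
  have "n_down D2 = n_down (take i M) + n_down [FCusp (\<sigma> < 0), FCusp (\<sigma> < 0)] + n_down (drop i M)"
    unfolding insert_zigzag_def Let_def by (simp only: n_down_app add.assoc)
  also have "\<dots> = n_down M + n_down [FCusp (\<sigma> < 0), FCusp (\<sigma> < 0)]"
    using n_down_app[of "take i M" "drop i M"] by simp
  finally show ?thesis using n_down_remap[of "[0..<n]" D1 i after] by (simp add: n_down_def)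
qed

lemma cross_lt: "k < n \<Longrightarrow> D1 ! k = FCross j s \<Longrightarrow> j < n"
  using cw unfolding cwf_def by (metis nth_mem)

lemma remap_lt: "j < n \<Longrightarrow> remap i after k j < n + 2"
  by (simp add: remap_def)

lemma cw2: "cwf D2"
  unfolding cwf_def
proof (intro ballI allI impI)
  fix e j s assume e: "e \<in> set D2" and ej: "e = FCross j s"
  then obtain k where k: "k < n + 2" "D2 ! k = e" using len2 by (metis in_set_conv_nth)
  show "j < length D2"
  proof (cases "k < i")
    case True
    then have "remap_event i after k (D1!k) = FCross j s" using k D2_nth ej by simp
    then obtain j0 where j0: "D1!k = FCross j0 s" "j = remap i after k j0"
      by (cases "D1!k") auto
    have "j0 < n" using cross_lt[of k j0 s] j0 True il by simp
    then show ?thesis using remap_lt j0 len2 by simp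
  next
    case False
    then have "\<not> k < i + 2" using k D2_nth ej by (metis fevent.distinct(1))
    then have "remap_event i after (k-2) (D1!(k-2)) = FCross j s" using k D2_nth ej False by simp
    then obtain j0 where j0: "D1!(k-2) = FCross j0 s" "j = remap i after (k-2) j0"
      by (cases "D1!(k-2)") auto
    have "j0 < n" using cross_lt[of "k-2" j0 s] j0 k \<open>\<not> k < i + 2\<close> by simp
    then show ?thesis using remap_lt j0 len2 by simp
  qed
qed

definition bk :: "nat \<Rightarrow> nat" where
  "bk k = (if k \<le> i then k else if k \<le> i + 2 then i else k - 2)"
definition fw :: "nat \<Rightarrow> nat" where
  "fw k = (if k < i then k else k + 2)"
definition E :: "'a list \<Rightarrow> 'a list" where
  "E c = map (\<lambda>k. c ! bk k) [0..<n+2]"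
definition R :: "'a list \<Rightarrow> 'a list" where
  "R c = map (\<lambda>k. c ! fw k) [0..<n]"

abbreviation "T1 \<equiv> underlying D1"
abbreviation "T2 \<equiv> underlying D2"

lemma lenT1: "length T1 = n" by (simp add: underlying_def)
lemma lenT2: "length T2 = n + 2" by (simp add: underlying_def len2)

lemma bk_fw: "bk (fw k) = k" by (simp add: bk_def fw_def)
lemma fw_lt: "k < n \<Longrightarrow> fw k < n + 2" by (simp add: fw_def)
lemma bk_lt: "k < n + 2 \<Longrightarrow> bk k < n" using il by (cases "k \<le> i + 2") (auto simp: bk_def)
lemma bk_remap: "bk (remap i after k j) = j" by (simp add: bk_def remap_def)
lemma bk_succ: "k < n \<Longrightarrow> bk ((fw k + 1) mod (n + 2)) = (k + 1) mod n"
proof -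
  assume k: "k < n"
  show ?thesis
  proof (cases "k + 1 < n")
    case True
    then have "(fw k + 1) mod (n+2) = fw k + 1" by (simp add: fw_def)
    then show ?thesis using True by (simp add: fw_def bk_def)
  next
    case False
    then have "k + 1 = n" using k by simp
    then show ?thesis using il by (simp add: fw_def bk_def)
  qed
qed

lemma E_nth: "k < n + 2 \<Longrightarrow> E c ! k = c ! bk k" by (simp add: E_def nth_map_upt del: upt_Suc)
lemma len_E: "length (E c) = n + 2" by (simp add: E_def)
lemma len_R: "length (R c) = n" by (simp add: R_def)

lemma T2_fw: "k < n \<Longrightarrow> T2 ! (fw k) = smooth (remap_event i after k (D1 ! k))"
  using D2_nth[of "fw k"] fw_lt[of k] len2 by (simp add: underlying_def fw_def)

lemma T1_nth: "k < n \<Longrightarrow> T1 ! k = smooth (D1 ! k)" by (simp add: underlying_def)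

lemma cond_fw: "k < n \<Longrightarrow> cond op T2 (E c) (fw k) \<longleftrightarrow> cond op T1 c k"
proof -
  assume k: "k < n"
  have a: "E c ! fw k = c ! k" using E_nth[OF fw_lt[OF k]] bk_fw by simp
  have b: "E c ! ((fw k + 1) mod (n+2)) = c ! ((k+1) mod n)"
  proof -
    have "(fw k + 1) mod (n+2) < n+2" by simp
    from E_nth[OF this] show ?thesis using bk_succ[OF k] by simp
  qed
  show ?thesis
  proof (cases "D1 ! k")
    case (FCusp b0)
    then show ?thesis using a b k T2_fw T1_nth lenT1 lenT2 by (simp add: cond_def)
  next
    case (FCross j s)
    have j: "j < n" using cross_lt k FCross by blast
    have c: "E c ! (remap i after k j) = c ! j" using E_nth[OF remap_lt[OF j]] bk_remap by simp
    show ?thesis using a b c k T2_fw T1_nth lenT1 lenT2 FCross by (cases s) (simp_all add: cond_def)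
  qed
qed

lemma T2_mid: "k = i \<or> k = i + 1 \<Longrightarrow> T2 ! k = TMark"
  using D2_nth[of k] il by (auto simp: underlying_def len2)

lemma cond_mid: "k = i \<or> k = i + 1 \<Longrightarrow> cond op T2 (E c) k"
proof -
  assume k: "k = i \<or> k = i + 1"
  have "(k + 1) mod (n + 2) = k + 1" using k il by auto
  moreover have "E c ! (k+1) = E c ! k"
    using k il E_nth[of k c] E_nth[of "k+1" c] by (auto simp: bk_def)
  ultimately show ?thesis using T2_mid k lenT2 by (simp add: cond_def)
qed

lemma set_E: "length c = n \<Longrightarrow> set (E c) = set c"
proof
  assume l: "length c = n"
  show "set (E c) \<subseteq> set c" using l bk_lt by (auto simp: E_def)
  show "set c \<subseteq> set (E c)"
  proof
    fix x assume "x \<in> set c"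
    then obtain k where k: "k < n" "c ! k = x" using l by (metis in_set_conv_nth)
    have "E c ! fw k = c ! bk (fw k)" by (rule E_nth[OF fw_lt[OF k(1)]])
    then have "E c ! fw k = x" using bk_fw k(2) by simp
    then show "x \<in> set (E c)" using fw_lt k len_E by (metis nth_mem)
  qed
qed

lemma top_E: "length c = n \<Longrightarrow> top_coloring X op T2 (E c) \<longleftrightarrow> top_coloring X op T1 c"
proof -
  assume l: "length c = n"
  have "(\<forall>k<n+2. cond op T2 (E c) k) \<longleftrightarrow> (\<forall>k<n. cond op T1 c k)"
  proof
    assume h: "\<forall>k<n+2. cond op T2 (E c) k"
    show "\<forall>k<n. cond op T1 c k" using h cond_fw fw_lt by blast
  next
    assume h: "\<forall>k<n. cond op T1 c k"
    show "\<forall>k<n+2. cond op T2 (E c) k"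
    proof (intro allI impI)
      fix k assume k: "k < n + 2"
      show "cond op T2 (E c) k"
      proof (cases "k = i \<or> k = i + 1")
        case True then show ?thesis using cond_mid by blast
      next
        case False
        then have "fw (bk k) = k" by (auto simp: fw_def bk_def)
        then show ?thesis using cond_fw[where k="bk k" and c=c] h bk_lt k by simp
      qed
    qed
  qed
  moreover have "length (E c) = length T2" by (simp only: len_E lenT2)
  moreover have "set (E c) = set c" by (rule set_E[OF l])
  ultimately show ?thesis unfolding top_coloring_cond using l lenT1 lenT2 by simp
qed

lemma colB: "Col_top X op T2 = Col_top X op T1"
proof -
  let ?A = "{c. top_coloring X op T1 c}"
  let ?B = "{c. top_coloring X op T2 c}"
  have b: "bij_betw E ?A ?B"
  proof (rule bij_betw_byWitness[where f'=R])
    show "\<forall>a\<in>?A. R (E a) = a"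
    proof
      fix a assume "a \<in> ?A"
      then have l: "length a = n" by (simp add: top_coloring_def lenT1)
      show "R (E a) = a"
        using l E_nth[OF fw_lt] bk_fw by (intro nth_equalityI) (auto simp: R_def)
    qed
    show "\<forall>a\<in>?B. E (R a) = a"
    proof
      fix a assume a: "a \<in> ?B"
      then have l: "length a = n + 2" by (simp add: top_coloring_def lenT2)
      have ci: "cond op T2 a i" "cond op T2 a (i+1)" using a il lenT2 by (auto simp: top_coloring_cond)
      have eq: "a ! (i+1) = a ! i" "a ! (i+2) = a ! (i+1)"
      proof -
        have "(i + 1) mod (n + 2) = i + 1" "(i + 1 + 1) mod (n + 2) = i + 2" using il by auto
        then show "a ! (i+1) = a ! i" "a ! (i+2) = a ! (i+1)"
          using ci T2_mid[of i] T2_mid[of "i+1"] lenT2 by (simp_all add: cond_def)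
      qed
      have "a ! fw (bk k) = a ! k" if "k < n + 2" for k
      proof (cases "k = i \<or> k = i + 1")
        case True then show ?thesis using eq by (auto simp: fw_def bk_def)
      next
        case False
        then have "fw (bk k) = k" by (auto simp: fw_def bk_def)
        then show ?thesis by simp
      qed
      then show "E (R a) = a"
      proof (intro nth_equalityI)
        show "length (E (R a)) = length a" using l by (simp only: len_E)
        fix k assume "k < length (E (R a))"
        then have k: "k < n + 2" by (simp only: len_E)
        assume h: "\<And>k. k < n + 2 \<Longrightarrow> a ! fw (bk k) = a ! k"
        have "E (R a) ! k = R a ! bk k" by (rule E_nth[OF k])
        also have "\<dots> = a ! fw (bk k)" using bk_lt[OF k] by (simp add: R_def)
        also have "\<dots> = a ! k" using h[OF k] .
        finally show "E (R a) ! k = a ! k" .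
      qed
    qed
    show "E ` ?A \<subseteq> ?B"
    proof
      fix x assume "x \<in> E ` ?A"
      then obtain c where c: "c \<in> ?A" "x = E c" by blast
      then have l: "length c = n" using tc_basic2[OF c(1)[simplified]] lenT1 by simp
      then show "x \<in> ?B" using top_E[OF l] c by simp
    qed
    show "R ` ?B \<subseteq> ?A"
    proof
      fix c assume "c \<in> R ` ?B"
      then obtain a where a: "a \<in> ?B" "c = R a" by blast
      have "E (R a) = a" using \<open>\<forall>a\<in>?B. E (R a) = a\<close> a by blast
      then show "c \<in> ?A" using top_E[OF len_R[of a]] a by simp
    qed
  qed
  then show ?thesis unfolding Col_top_def by (metis bij_betw_same_card)
qed

end


lemma stabs_inv:
  assumes "stabs \<sigma> m D D'" "cwf D"
  shows "cwf D' \<and> n_up D' = n_up D + (if \<sigma> < 0 then 2*m else 0)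
     \<and> n_down D' = n_down D + (if \<sigma> < 0 then 0 else 2*m)
     \<and> Col_top X op (underlying D') = Col_top X op (underlying D)"
  using assms
proof (induction rule: stabs.induct)
  case (stabs_zero \<sigma> D)
  then show ?case by simp
next
  case (stabs_step \<sigma> m D D1 i after)
  then have IH: "cwf D1" "n_up D1 = n_up D + (if \<sigma> < 0 then 2*m else 0)"
     "n_down D1 = n_down D + (if \<sigma> < 0 then 0 else 2*m)"
     "Col_top X op (underlying D1) = Col_top X op (underlying D)" by auto
  interpret zz D1 i after \<sigma> using IH(1) stabs_step.hyps(2) by unfold_locales
  show ?case using cw2 nup2 ndown2 colB[of X op] IH by auto
qed

theorem theorem5p2:
  fixes X :: "'a set" and op :: "'a \<Rightarrow> 'a \<Rightarrow> 'a" and u d :: "'a \<Rightarrow> 'a"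
    and D D' :: "fevent list"
  assumes "finite X"
    and "gl_quandle X op u d"
    and "front_wf D"
    and "stabs (- sgn (rot D)) (nat \<bar>rot D\<bar>) D D'"
  shows "Col_front X op u d D' = Col_top X op (underlying D)"
proof -
  interpret glq X op u d using assms(2) by unfold_locales
  have cw: "cwf D" using assms(3) unfolding front_wf_def cwf_def by blast
  have ev: "even (n_up D + n_down D)" using assms(3) unfolding front_wf_def by blast
  define r where "r = rot D"
  have r2: "int (n_down D) - int (n_up D) = 2 * r"
  proof -
    have "even (int (n_down D) - int (n_up D))" using ev
      by (metis even_add even_diff of_nat_add even_of_nat add.commute)
    then show ?thesis unfolding r_def rot_def by auto
  qed
  note si = stabs_inv[OF assms(4) cw, of X op]
  have bal: "n_up D' = n_down D'"
  proof (cases "r > 0")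
    case True
    then have "- sgn (rot D) < 0" "int (nat \<bar>rot D\<bar>) = r" using r_def by auto
    then show ?thesis using si r2 by auto
  next
    case False
    show ?thesis
    proof (cases "r = 0")
      case True
      then show ?thesis using si r2 r_def by auto
    next
      case F2: False
      then have "\<not> - sgn (rot D) < 0" "int (nat \<bar>rot D\<bar>) = - r" using r_def False by auto
      then show ?thesis using si r2 by auto
    qed
  qed
  have "Col_front X op u d D' = Col_top X op (underlying D')"
    using colA[OF bal] si by blast
  then show ?thesis using si by simp
qed


end
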